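(* Let $X$ be a real Banach space with a normalized Schauder basis $\mathcal B=(e_n)_{n=1}^\infty$ with biorthogonal functionals $(e_n^* )$ which is unconditional or boundedly complete, and let $\mathcal E=(\varepsilon_n)_{n=1}^\infty$ be a sequence of nonnegative numbers. If the brick $K_{\mathcal B,\mathcal E}$ has finite extreme radius, then $K_{\mathcal B,\mathcal E}$ is compact.
   Context: The brick is $K_{\mathcal B,\mathcal E}=\{x\in X:\ |e_n^*(x)|\le\varepsilon_n \text{ for all } n\}$. A point $x_0\in A$ is an extreme point of $A$ if for every nonzero $x\in X$ there is $\lambda\in[-1,1]$ with $x_0+\lambda x\notin A$. The extreme radius of $K$ is the supremum of $\|x_0\|$ over extreme points $x_0$ of $K$ if an extreme point exists, and $\infty$ otherwise. A basis is unconditional if $\sum_ne_n^*(x)e_n$ converges unconditionally for every $x$; it is boundedly complete if $\sup_n\|\sum_{k=1}^na_ke_k\|<\infty$ implies convergence of $\sum_na_ne_n$. *)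

theory Defs
  imports "HOL-Analysis.Analysis"
begin

text \<open>Schauder basis (indexed from 0): every vector has a unique expansion
  x = sum_n a_n e_n (norm convergence of partial sums).\<close>
definition schauder_basis :: "(nat \<Rightarrow> 'a::real_normed_vector) \<Rightarrow> bool" where
  "schauder_basis e \<longleftrightarrow> (\<forall>x. \<exists>!a::nat \<Rightarrow> real. (\<lambda>n. a n *\<^sub>R e n) sums x)"

definition coord :: "(nat \<Rightarrow> 'a::real_normed_vector) \<Rightarrow> nat \<Rightarrow> 'a \<Rightarrow> real" where
  "coord e n x = (THE a::nat \<Rightarrow> real. (\<lambda>k. a k *\<^sub>R e k) sums x) n"

definition normalized_basis :: "(nat \<Rightarrow> 'a::real_normed_vector) \<Rightarrow> bool" where
  "normalized_basis e \<longleftrightarrow> (\<forall>n. norm (e n) = 1)"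

text \<open>Unconditional: the expansion converges unconditionally for every x
  (summable_on over nat = convergence of the net of finite partial sums).\<close>
definition unconditional_basis :: "(nat \<Rightarrow> 'a::real_normed_vector) \<Rightarrow> bool" where
  "unconditional_basis e \<longleftrightarrow> (\<forall>x. (\<lambda>n. coord e n x *\<^sub>R e n) summable_on UNIV)"

definition boundedly_complete :: "(nat \<Rightarrow> 'a::real_normed_vector) \<Rightarrow> bool" where
  "boundedly_complete e \<longleftrightarrow>
     (\<forall>a::nat \<Rightarrow> real. bounded (range (\<lambda>N. \<Sum>k<N. a k *\<^sub>R e k)) \<longrightarrow> summable (\<lambda>n. a n *\<^sub>R e n))"

definition brick :: "(nat \<Rightarrow> 'a::real_normed_vector) \<Rightarrow> (nat \<Rightarrow> real) \<Rightarrow> 'a set" where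
  "brick e \<epsilon> = {x. \<forall>n. \<bar>coord e n x\<bar> \<le> \<epsilon> n}"

definition is_extreme_pt :: "'a::real_vector set \<Rightarrow> 'a \<Rightarrow> bool" where
  "is_extreme_pt A x0 \<longleftrightarrow> x0 \<in> A \<and> (\<forall>x. x \<noteq> 0 \<longrightarrow> (\<exists>t\<in>{-1..1::real}. x0 + t *\<^sub>R x \<notin> A))"

definition extreme_radius :: "'a::real_normed_vector set \<Rightarrow> ereal" where
  "extreme_radius A = (if \<exists>x0. is_extreme_pt A x0
      then (SUP x0\<in>{x0. is_extreme_pt A x0}. ereal (norm x0)) else \<infinity>)"

end

theory Submission
  imports Defs
begin

lemma coord_sums:
  assumes "schauder_basis e" shows "(\<lambda>n. coord e n x *\<^sub>R e n) sums x"
proof -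
  from assms have "\<exists>!a. (\<lambda>n. a n *\<^sub>R e n) sums x" unfolding schauder_basis_def by blast
  from theI'[OF this] show ?thesis unfolding coord_def by simp
qed

lemma coord_eq:
  assumes "schauder_basis e" "(\<lambda>n. a n *\<^sub>R e n) sums x" shows "coord e n x = a n"
proof -
  from assms(1) have u: "\<exists>!a. (\<lambda>n. a n *\<^sub>R e n) sums x" unfolding schauder_basis_def by blast
  have "(THE a. (\<lambda>n. a n *\<^sub>R e n) sums x) = a" using the1_equality[OF u] assms(2) by blast
  thus ?thesis unfolding coord_def by simp
qed

lemma coord_lin:
  assumes "schauder_basis e"
  shows "coord e n (x + t *\<^sub>R z) = coord e n x + t * coord e n z"
proof -
  have "(\<lambda>n. (coord e n x + t * coord e n z) *\<^sub>R e n) sums (x + t *\<^sub>R z)"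
    using sums_add[OF coord_sums[OF assms, of x] sums_scaleR_right[OF coord_sums[OF assms, of z], of t]]
    by (simp add: scaleR_add_left)
  from coord_eq[OF assms this] show ?thesis .
qed

lemma coord_basis:
  assumes "schauder_basis e"
  shows "coord e n (e m) = (if n = m then 1 else 0)"
proof -
  have "(\<lambda>k. (if k = m then 1 else 0) *\<^sub>R e k) sums e m"
  proof -
    have "(\<lambda>k. (if k = m then 1 else 0) *\<^sub>R e k) = (\<lambda>r. if r = m then e r else 0)" by auto
    thus ?thesis using sums_single[of m e] by simp
  qed
  from coord_eq[OF assms this] show ?thesis .
qed

lemma coord_zero_imp:
  assumes "schauder_basis e" "\<And>n. coord e n x = 0" shows "x = 0"
proof -
  have "(\<lambda>n. 0) sums x" using coord_sums[OF assms(1), of x] assms(2) by simp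
  thus ?thesis using sums_unique sums_zero by metis
qed

lemma extreme_coords:
  assumes B: "schauder_basis e" and nz: "\<And>n. e n \<noteq> 0"
    and ex: "is_extreme_pt (brick e \<epsilon>) x0"
  shows "\<bar>coord e n x0\<bar> = \<epsilon> n"
proof (rule ccontr)
  assume ne: "\<bar>coord e n x0\<bar> \<noteq> \<epsilon> n"
  have inK: "x0 \<in> brick e \<epsilon>" using ex unfolding is_extreme_pt_def by blast
  hence le: "\<bar>coord e m x0\<bar> \<le> \<epsilon> m" for m unfolding brick_def by blast
  define d where "d = \<epsilon> n - \<bar>coord e n x0\<bar>"
  have dpos: "d > 0" using le[of n] ne unfolding d_def by linarith
  have "d *\<^sub>R e n \<noteq> 0" using dpos nz[of n] by simp
  then obtain t where t: "t \<in> {-1..1::real}" "x0 + t *\<^sub>R (d *\<^sub>R e n) \<notin> brick e \<epsilon>"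
    using ex unfolding is_extreme_pt_def by blast
  have "x0 + t *\<^sub>R (d *\<^sub>R e n) \<in> brick e \<epsilon>"
    unfolding brick_def
  proof (safe)
    fix m
    have eq: "coord e m (x0 + t *\<^sub>R (d *\<^sub>R e n)) = coord e m x0 + (if m = n then t * d else 0)"
      using coord_lin[OF B, of m x0 "t*d" "e n"] coord_basis[OF B, of m n] by simp
    show "\<bar>coord e m (x0 + t *\<^sub>R (d *\<^sub>R e n))\<bar> \<le> \<epsilon> m"
    proof (cases "m = n")
      case True
      have "\<bar>t * d\<bar> \<le> d" using t(1) dpos by (simp add: abs_mult mult_le_cancel_right1 abs_le_iff)
      thus ?thesis using True eq unfolding d_def by simp
    next
      case False thus ?thesis using eq le[of m] by simp
    qed
  qed
  with t(2) show False by blast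
qed

lemma signs_extreme:
  assumes B: "schauder_basis e" and y: "\<And>n. \<bar>coord e n y\<bar> = \<epsilon> n"
  shows "is_extreme_pt (brick e \<epsilon>) y"
  unfolding is_extreme_pt_def
proof (intro conjI allI impI)
  show "y \<in> brick e \<epsilon>" using y unfolding brick_def by simp
  fix x :: 'a assume "x \<noteq> 0"
  then obtain n where bn: "coord e n x \<noteq> 0" using coord_zero_imp[OF B] by blast
  define a where "a = coord e n y"
  define b where "b = coord e n x"
  have "\<bar>a + 1 * b\<bar> > \<epsilon> n \<or> \<bar>a + (-1) * b\<bar> > \<epsilon> n"
    using y[of n] bn unfolding a_def[symmetric] b_def[symmetric]
    by (cases "a \<ge> 0"; cases "b > 0"; auto simp: abs_if)
  then obtain t where t: "t \<in> {-1..1::real}" "\<bar>a + t * b\<bar> > \<epsilon> n"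
  proof
    assume "\<bar>a + 1 * b\<bar> > \<epsilon> n" thus ?thesis using that[of 1] by simp
  next
    assume "\<bar>a + (-1) * b\<bar> > \<epsilon> n" thus ?thesis using that[of "-1"] by simp
  qed
  have "coord e n (y + t *\<^sub>R x) = a + t * b" using coord_lin[OF B] a_def b_def by simp
  hence "y + t *\<^sub>R x \<notin> brick e \<epsilon>" using t(2) unfolding brick_def by (metis (mono_tags, lifting) mem_Collect_eq not_le)
  with t(1) show "\<exists>t\<in>{-1..1}. y + t *\<^sub>R x \<notin> brick e \<epsilon>" by blast
qed


lemma seg_max:
  fixes z v :: "'a::real_normed_vector"
  assumes "\<bar>t\<bar> \<le> a"
  shows "norm (z + t *\<^sub>R v) \<le> norm (z + a *\<^sub>R v) \<or> norm (z + t *\<^sub>R v) \<le> norm (z + (-a) *\<^sub>R v)"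
proof (cases "a = 0")
  case True thus ?thesis using assms by simp
next
  case False
  hence apos: "a > 0" using assms by linarith
  define al where "al = (a + t) / (2 * a)"
  have al0: "0 \<le> al" "al \<le> 1" using assms apos unfolding al_def by (auto simp: field_simps abs_le_iff)
  have "z + t *\<^sub>R v = al *\<^sub>R (z + a *\<^sub>R v) + (1 - al) *\<^sub>R (z + (-a) *\<^sub>R v)"
  proof -
    have "al * a - (1 - al) * a = t" using apos unfolding al_def by (simp add: field_simps)
    have "al *\<^sub>R (z + a *\<^sub>R v) + (1 - al) *\<^sub>R (z + (-a) *\<^sub>R v) = z + (al * a - (1 - al) * a) *\<^sub>R v"
    proof -
      have "al *\<^sub>R (z + a *\<^sub>R v) + (1 - al) *\<^sub>R (z + (-a) *\<^sub>R v) = (al + (1 - al)) *\<^sub>R z + (al * a + (1 - al) * (-a)) *\<^sub>R v"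
        by (simp only: scaleR_right_distrib scaleR_add_left scaleR_scaleR add_ac)
      thus ?thesis by simp
    qed
    thus ?thesis using \<open>al * a - (1 - al) * a = t\<close> by simp
  qed
  hence "norm (z + t *\<^sub>R v) \<le> al * norm (z + a *\<^sub>R v) + (1 - al) * norm (z + (-a) *\<^sub>R v)"
    using norm_triangle_ineq[of "al *\<^sub>R (z + a *\<^sub>R v)" "(1 - al) *\<^sub>R (z + (-a) *\<^sub>R v)"] al0
    by simp
  moreover
  { fix p q :: real assume "p \<le> q"
    hence "al * p \<le> al * q" using al0 by (simp add: mult_left_mono)
    moreover have "(1 - al) * q = q - al * q" by (simp add: algebra_simps)
    ultimately have "al * p + (1 - al) * q \<le> q" by linarith
  }
  moreover
  { fix p q :: real assume "q \<le> p"
    hence "(1 - al) * q \<le> (1 - al) * p" using al0 by (simp add: mult_left_mono)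
    moreover have "(1 - al) * p = p - al * p" by (simp add: algebra_simps)
    ultimately have "al * p + (1 - al) * q \<le> p" by linarith
  }
  ultimately show ?thesis by (meson dual_order.trans linear)
qed

lemma box_to_signs:
  fixes v :: "nat \<Rightarrow> 'a::real_normed_vector"
  assumes "finite F" "\<And>n. \<bar>t n\<bar> \<le> \<epsilon> n" "\<And>n. \<epsilon> n \<ge> 0"
  shows "\<exists>s. (\<forall>n. \<bar>s n\<bar> = \<epsilon> n) \<and> norm (w + (\<Sum>n\<in>F. t n *\<^sub>R v n)) \<le> norm (w + (\<Sum>n\<in>F. s n *\<^sub>R v n))"
  using assms(1)
proof (induction F arbitrary: w rule: finite_induct)
  case empty
  show ?case by (rule exI[of _ \<epsilon>]) (use assms(3) in simp)
next
  case (insert n F)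
  obtain s where s: "\<forall>k. \<bar>s k\<bar> = \<epsilon> k"
    "norm ((w + t n *\<^sub>R v n) + (\<Sum>k\<in>F. t k *\<^sub>R v k)) \<le> norm ((w + t n *\<^sub>R v n) + (\<Sum>k\<in>F. s k *\<^sub>R v k))"
    using insert.IH by blast
  define z where "z = w + (\<Sum>k\<in>F. s k *\<^sub>R v k)"
  have "\<exists>\<sigma>. \<bar>\<sigma>\<bar> = \<epsilon> n \<and> norm (z + t n *\<^sub>R v n) \<le> norm (z + \<sigma> *\<^sub>R v n)"
    using seg_max[OF assms(2)[of n], of z "v n"] assms(3)[of n]
    by (metis abs_minus_cancel abs_of_nonneg)
  then obtain \<sigma> where \<sigma>: "\<bar>\<sigma>\<bar> = \<epsilon> n" "norm (z + t n *\<^sub>R v n) \<le> norm (z + \<sigma> *\<^sub>R v n)" by blast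
  define s' where "s' = s(n := \<sigma>)"
  have sF: "(\<Sum>k\<in>F. s' k *\<^sub>R v k) = (\<Sum>k\<in>F. s k *\<^sub>R v k)"
    using insert.hyps(2) unfolding s'_def by (intro sum.cong) auto
  have "norm (w + (\<Sum>k\<in>insert n F. t k *\<^sub>R v k)) = norm ((w + t n *\<^sub>R v n) + (\<Sum>k\<in>F. t k *\<^sub>R v k))"
    using insert.hyps by (simp add: algebra_simps)
  also have "\<dots> \<le> norm (z + t n *\<^sub>R v n)" using s(2) unfolding z_def by (simp add: algebra_simps)
  also have "\<dots> \<le> norm (z + \<sigma> *\<^sub>R v n)" by (rule \<sigma>(2))
  also have "\<dots> = norm (w + (\<Sum>k\<in>insert n F. s' k *\<^sub>R v k))"
    using insert.hyps sF unfolding z_def by (simp add: s'_def algebra_simps)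
  finally have "norm (w + (\<Sum>k\<in>insert n F. t k *\<^sub>R v k)) \<le> norm (w + (\<Sum>k\<in>insert n F. s' k *\<^sub>R v k))" .
  moreover have "\<forall>k. \<bar>s' k\<bar> = \<epsilon> k" using s(1) \<sigma>(1) unfolding s'_def by auto
  ultimately show ?case by blast
qed

lemma blocks:
  fixes v :: "nat \<Rightarrow> 'a::banach"
  assumes summ: "\<And>t. (\<forall>n. \<bar>t n\<bar> = \<epsilon> n) \<Longrightarrow> summable (\<lambda>n. t n *\<^sub>R v n)"
    and "\<delta> > 0"
  shows "\<exists>N. \<forall>t. (\<forall>n. \<bar>t n\<bar> = \<epsilon> n) \<longrightarrow> (\<forall>m\<ge>N. \<forall>L. norm (\<Sum>k\<in>{m..<L}. t k *\<^sub>R v k) \<le> \<delta>)"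
proof (rule ccontr)
  assume "\<not> ?thesis"
  hence H: "\<forall>N. \<exists>t m L. (\<forall>n. \<bar>t n\<bar> = \<epsilon> n) \<and> m \<ge> N \<and> norm (\<Sum>k\<in>{m..<L}. t k *\<^sub>R v k) > \<delta>"
    by (auto simp: not_le)
  have "\<forall>N. \<exists>p. (\<forall>n. \<bar>fst p n\<bar> = \<epsilon> n) \<and> fst (snd p) \<ge> N \<and> norm (\<Sum>k\<in>{fst (snd p)..<snd (snd p)}. fst p k *\<^sub>R v k) > \<delta>"
  proof
    fix N
    from H obtain t m L where "(\<forall>n. \<bar>t n\<bar> = \<epsilon> n) \<and> m \<ge> N \<and> norm (\<Sum>k\<in>{m..<L}. t k *\<^sub>R v k) > \<delta>"
      by blast
    thus "\<exists>p. (\<forall>n. \<bar>fst p n\<bar> = \<epsilon> n) \<and> fst (snd p) \<ge> N \<and> norm (\<Sum>k\<in>{fst (snd p)..<snd (snd p)}. fst p k *\<^sub>R v k) > \<delta>"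
      by (intro exI[of _ "(t, m, L)"]) simp
  qed
  from choice[OF this] obtain g where g: "\<forall>N. (\<forall>n. \<bar>fst (g N) n\<bar> = \<epsilon> n) \<and> fst (snd (g N)) \<ge> N \<and> norm (\<Sum>k\<in>{fst (snd (g N))..<snd (snd (g N))}. fst (g N) k *\<^sub>R v k) > \<delta>"
    by blast
  define T where "T N = fst (g N)" for N
  define M where "M N = fst (snd (g N))" for N
  define L where "L N = snd (snd (g N))" for N
  have TML: "\<And>N. (\<forall>n. \<bar>T N n\<bar> = \<epsilon> n)" "\<And>N. M N \<ge> N"
     "\<And>N. norm (\<Sum>k\<in>{M N..<L N}. T N k *\<^sub>R v k) > \<delta>"
    using g unfolding T_def M_def L_def by auto
  have MLlt: "M N < L N" for N
  proof (rule ccontr)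
    assume "\<not> M N < L N" hence "{M N..<L N} = {}" by auto
    thus False using TML(3)[of N] \<open>\<delta> > 0\<close> by simp
  qed
  define b where "b = rec_nat 0 (\<lambda>_ p. L p)"
  have b0: "b 0 = 0" and bS: "b (Suc j) = L (b j)" for j unfolding b_def by simp_all
  have bmono: "strict_mono b"
    unfolding strict_mono_Suc_iff
  proof
    fix j show "b j < b (Suc j)" using TML(2)[of "b j"] MLlt[of "b j"] bS[of j] by simp
  qed
  define J where "J n = (GREATEST j. b j \<le> n)" for n
  have J: "J n = j" if "b j \<le> n" "n < b (Suc j)" for n j
    unfolding J_def
  proof (rule Greatest_equality)
    show "b j \<le> n" by fact
    fix y assume "b y \<le> n"
    show "y \<le> j"
    proof (rule ccontr)
      assume "\<not> y \<le> j" hence "Suc j \<le> y" by simp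
      hence "b (Suc j) \<le> b y" using bmono by (simp add: strict_mono_less_eq)
      thus False using that \<open>b y \<le> n\<close> by simp
    qed
  qed
  define s where "s n = T (b (J n)) n" for n
  have "\<forall>n. \<bar>s n\<bar> = \<epsilon> n" using TML(1) unfolding s_def by simp
  hence "summable (\<lambda>n. s n *\<^sub>R v n)" by (rule summ)
  hence "\<exists>N. \<forall>m\<ge>N. \<forall>n. norm (sum (\<lambda>n. s n *\<^sub>R v n) {m..<n}) < \<delta>"
    unfolding summable_Cauchy using \<open>\<delta> > 0\<close> by simp
  then obtain N0 where N0: "\<And>m n. m \<ge> N0 \<Longrightarrow> norm (\<Sum>k\<in>{m..<n}. s k *\<^sub>R v k) < \<delta>"
    by blast
  define j where "j = N0"
  have "N0 \<le> b j" unfolding j_def using bmono seq_suble by blast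
  also have "b j \<le> M (b j)" by (rule TML(2))
  finally have m: "N0 \<le> M (b j)" .
  have "(\<Sum>k\<in>{M (b j)..<L (b j)}. s k *\<^sub>R v k) = (\<Sum>k\<in>{M (b j)..<L (b j)}. T (b j) k *\<^sub>R v k)"
  proof (intro sum.cong refl)
    fix k assume "k \<in> {M (b j)..<L (b j)}"
    hence "b j \<le> k" "k < b (Suc j)" using TML(2)[of "b j"] bS by auto
    thus "s k *\<^sub>R v k = T (b j) k *\<^sub>R v k" unfolding s_def using J by simp
  qed
  thus False using N0[OF m, of "L (b j)"] TML(3)[of "b j"] by simp
qed


lemma box_subseq:
  fixes u :: "nat \<Rightarrow> nat \<Rightarrow> real"
  assumes "\<And>j n. \<bar>u j n\<bar> \<le> \<epsilon> n"
  shows "\<exists>r a. strict_mono r \<and> (\<forall>n. \<bar>a n\<bar> \<le> \<epsilon> n) \<and> (\<forall>n. (\<lambda>j. u (r j) n) \<longlonglongrightarrow> a n)"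
proof -
  define S where "S = PiE (UNIV::nat set) (\<lambda>n. {-\<epsilon> n..\<epsilon> n})"
  have "compactin (product_topology (\<lambda>_. euclidean) UNIV) S"
    unfolding S_def by (subst compactin_PiE) auto
  hence cS: "compact S" by (simp add: euclidean_product_topology)
  have "\<And>j n. u j n \<in> {-\<epsilon> n..\<epsilon> n}" using assms by (metis abs_le_iff atLeastAtMost_iff minus_le_iff)
  hence uS: "\<And>j. u j \<in> S" by (auto simp: S_def)
  obtain a r where a: "a \<in> S" "strict_mono r" "(u \<circ> r) \<longlonglongrightarrow> a"
    using seq_compactE[OF compact_imp_seq_compact[OF cS], of u] uS by blast
  have "\<forall>n. (\<lambda>j. u (r j) n) \<longlonglongrightarrow> a n"
  proof
    fix n
    have "continuous_on UNIV (\<lambda>x::nat\<Rightarrow>real. x n)" by simp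
    hence "isCont (\<lambda>x::nat\<Rightarrow>real. x n) a" by (metis continuous_on_eq_continuous_at open_UNIV UNIV_I)
    from isCont_tendsto_compose[OF this a(3)] show "(\<lambda>j. u (r j) n) \<longlonglongrightarrow> a n" by (simp add: o_def)
  qed
  moreover have "\<forall>n. \<bar>a n\<bar> \<le> \<epsilon> n"
  proof
    fix n have "a n \<in> {-\<epsilon> n..\<epsilon> n}" using a(1) unfolding S_def by blast
    thus "\<bar>a n\<bar> \<le> \<epsilon> n" by (simp add: abs_le_iff)
  qed
  ultimately show ?thesis using a(2) by blast
qed

lemma tail_bound:
  fixes v :: "nat \<Rightarrow> 'a::real_normed_vector"
  assumes "(\<lambda>k. a k *\<^sub>R v k) sums z" "\<forall>m\<ge>N. \<forall>L. norm (\<Sum>k\<in>{m..<L}. a k *\<^sub>R v k) \<le> \<delta>"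
  shows "norm (z - (\<Sum>k<N. a k *\<^sub>R v k)) \<le> \<delta>"
proof -
  have "(\<lambda>n. (\<Sum>k<n. a k *\<^sub>R v k) - (\<Sum>k<N. a k *\<^sub>R v k)) \<longlonglongrightarrow> z - (\<Sum>k<N. a k *\<^sub>R v k)"
    using assms(1) unfolding sums_def by (intro tendsto_diff) auto
  hence lim: "(\<lambda>n. norm ((\<Sum>k<n. a k *\<^sub>R v k) - (\<Sum>k<N. a k *\<^sub>R v k))) \<longlonglongrightarrow> norm (z - (\<Sum>k<N. a k *\<^sub>R v k))"
    by (rule tendsto_norm)
  have "\<forall>n\<ge>N. norm ((\<Sum>k<n. a k *\<^sub>R v k) - (\<Sum>k<N. a k *\<^sub>R v k)) \<le> \<delta>"
  proof (intro allI impI)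
    fix n assume "N \<le> n"
    hence "(\<Sum>k<n. a k *\<^sub>R v k) - (\<Sum>k<N. a k *\<^sub>R v k) = (\<Sum>k\<in>{N..<n}. a k *\<^sub>R v k)"
      using sum_diff_nat_ivl[of 0 N n "\<lambda>k. a k *\<^sub>R v k"] by (simp add: lessThan_atLeast0)
    thus "norm ((\<Sum>k<n. a k *\<^sub>R v k) - (\<Sum>k<N. a k *\<^sub>R v k)) \<le> \<delta>" using assms(2) by simp
  qed
  from LIMSEQ_le_const2[OF lim] this show ?thesis by blast
qed

theorem theorem3p5:
  fixes e :: "nat \<Rightarrow> 'a::banach" and \<epsilon> :: "nat \<Rightarrow> real"
  assumes "schauder_basis e"
    and "normalized_basis e"
    and "unconditional_basis e \<or> boundedly_complete e"
    and "\<And>n. \<epsilon> n \<ge> 0"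
    and "extreme_radius (brick e \<epsilon>) < \<infinity>"
  shows "compact (brick e \<epsilon>)"
proof -
  note B = assms(1)
  have nz: "\<And>n. e n \<noteq> 0" using assms(2) unfolding normalized_basis_def
    by (metis norm_zero zero_neq_one)
  define K where "K = brick e \<epsilon>"
  have exK: "\<exists>x0. is_extreme_pt K x0"
  proof (rule ccontr)
    assume "\<not> ?thesis" thus False using assms(5) unfolding extreme_radius_def K_def by (auto split: if_splits)
  qed
  then obtain x0 where x0: "is_extreme_pt K x0" by blast
  define S where "S = (SUP x0\<in>{x0. is_extreme_pt K x0}. ereal (norm x0))"
  have SI: "S < \<infinity>" using assms(5) exK unfolding extreme_radius_def K_def S_def by simp
  have Sup: "ereal (norm x) \<le> S" if "is_extreme_pt K x" for x
    unfolding S_def by (rule SUP_upper) (use that in simp)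
  obtain R where R: "\<And>x. is_extreme_pt K x \<Longrightarrow> norm x \<le> R"
  proof (cases S)
    case (real r)
    have "norm x \<le> r" if "is_extreme_pt K x" for x using Sup[OF that] real by simp
    thus ?thesis using that by blast
  next
    case PInf thus ?thesis using SI by simp
  next
    case MInf thus ?thesis using Sup[OF x0] by simp
  qed
  have cx0: "\<bar>coord e n x0\<bar> = \<epsilon> n" for n using extreme_coords[OF B nz] x0 unfolding K_def by blast
  define f where "f n = coord e n x0 *\<^sub>R e n" for n
  have fs: "f sums x0" unfolding f_def by (rule coord_sums[OF B])
  have bnd: "norm (\<Sum>n. t n *\<^sub>R e n) \<le> R"
    if t: "\<forall>n. \<bar>t n\<bar> = \<epsilon> n" and st: "summable (\<lambda>n. t n *\<^sub>R e n)" for t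
  proof -
    have ys: "(\<lambda>n. t n *\<^sub>R e n) sums (\<Sum>n. t n *\<^sub>R e n)" using st by (rule summable_sums)
    have "\<forall>n. \<bar>coord e n (\<Sum>n. t n *\<^sub>R e n)\<bar> = \<epsilon> n" using coord_eq[OF B ys] t by simp
    hence "is_extreme_pt K (\<Sum>n. t n *\<^sub>R e n)" using signs_extreme[OF B] unfolding K_def by blast
    thus ?thesis by (rule R)
  qed
  have summ: "summable (\<lambda>n. t n *\<^sub>R e n)" if t: "\<forall>n. \<bar>t n\<bar> = \<epsilon> n" for t
    using assms(3)
  proof
    assume "unconditional_basis e"
    hence fu: "f summable_on UNIV" unfolding unconditional_basis_def f_def by blast
    define P where "P = {n. t n = coord e n x0}"
    have "(\<lambda>n. t n *\<^sub>R e n) summable_on P"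
      using summable_on_subset_banach[OF fu, of P]
      by (subst summable_on_cong[where g = f]) (auto simp: P_def f_def)
    moreover have "(\<lambda>n. t n *\<^sub>R e n) summable_on (-P)"
    proof -
      have "(\<lambda>n. - f n) summable_on (-P)" using summable_on_subset_banach[OF fu, of "-P"]
        by (simp add: summable_on_uminus)
      moreover have "t n *\<^sub>R e n = - f n" if "n \<in> -P" for n
      proof -
        have "t n \<noteq> coord e n x0" "\<bar>t n\<bar> = \<bar>coord e n x0\<bar>" using that t cx0 by (auto simp: P_def)
        hence "t n = - coord e n x0" by (auto simp: abs_if split: if_splits)
        thus ?thesis by (simp add: f_def)
      qed
      ultimately show ?thesis by (subst summable_on_cong) auto
    qed
    ultimately have "(\<lambda>n. t n *\<^sub>R e n) summable_on (P \<union> -P)"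
      by (intro summable_on_Un_disjoint) auto
    thus ?thesis by (intro summable_on_imp_summable) simp
  next
    assume bc: "boundedly_complete e"
    have "convergent (\<lambda>N. \<Sum>k<N. f k)" using fs unfolding sums_def convergent_def by blast
    hence "Bseq (\<lambda>N. \<Sum>k<N. f k)" by (rule convergent_imp_Bseq)
    then obtain Kb where Kb: "Kb > 0" "\<And>N. norm (\<Sum>k<N. f k) \<le> Kb"
      by (rule BseqE) blast
    have "norm (\<Sum>k<N. t k *\<^sub>R e k) \<le> R + norm x0 + Kb" for N
    proof -
      define h where "h k = (if k < N then t k else coord e k x0)" for k
      have hf: "(\<lambda>k. h (k + N) *\<^sub>R e (k + N)) = (\<lambda>k. f (k + N))" by (auto simp: h_def f_def)
      have "summable (\<lambda>k. f (k + N))" using sums_summable[OF fs] by (simp only: summable_iff_shift)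
      hence "summable (\<lambda>k. h (k + N) *\<^sub>R e (k + N))" using hf by simp
      hence sh: "summable (\<lambda>k. h k *\<^sub>R e k)"
        using summable_iff_shift[of "\<lambda>k. h k *\<^sub>R e k" N] by simp
      have "\<forall>n. \<bar>h n\<bar> = \<epsilon> n" using t cx0 by (simp add: h_def)
      hence nh: "norm (\<Sum>k. h k *\<^sub>R e k) \<le> R" using bnd sh by blast
      have split1: "(\<Sum>k. h k *\<^sub>R e k) = (\<Sum>k. f (k + N)) + (\<Sum>k<N. h k *\<^sub>R e k)"
        using suminf_split_initial_segment[OF sh, of N] hf by simp
      have split2: "x0 = (\<Sum>k. f (k + N)) + (\<Sum>k<N. f k)"
        using suminf_split_initial_segment[OF sums_summable[OF fs], of N] sums_unique[OF fs] by simp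
      have hs: "(\<Sum>k<N. h k *\<^sub>R e k) = (\<Sum>k<N. t k *\<^sub>R e k)" by (simp add: h_def)
      have "(\<Sum>k<N. t k *\<^sub>R e k) = (\<Sum>k. h k *\<^sub>R e k) - x0 + (\<Sum>k<N. f k)"
        using split1 split2 hs by (simp add: algebra_simps)
      hence "norm (\<Sum>k<N. t k *\<^sub>R e k) \<le> norm (\<Sum>k. h k *\<^sub>R e k) + norm x0 + norm (\<Sum>k<N. f k)"
        using norm_triangle_ineq[of "(\<Sum>k. h k *\<^sub>R e k) - x0" "\<Sum>k<N. f k"]
          norm_triangle_ineq4[of "\<Sum>k. h k *\<^sub>R e k" x0] by simp
      thus ?thesis using nh Kb(2)[of N] by linarith
    qed
    hence "bounded (range (\<lambda>N. \<Sum>k<N. t k *\<^sub>R e k))"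
      unfolding bounded_iff by blast
    thus ?thesis using bc unfolding boundedly_complete_def by blast
  qed
  have tails: "\<exists>N. \<forall>t. (\<forall>n. \<bar>t n\<bar> \<le> \<epsilon> n) \<longrightarrow> (\<forall>m\<ge>N. \<forall>L. norm (\<Sum>k\<in>{m..<L}. t k *\<^sub>R e k) \<le> \<delta>)"
    if dpos: "\<delta> > 0" for \<delta>
  proof -
    obtain N where N: "\<forall>t. (\<forall>n. \<bar>t n\<bar> = \<epsilon> n) \<longrightarrow> (\<forall>m\<ge>N. \<forall>L. norm (\<Sum>k\<in>{m..<L}. t k *\<^sub>R e k) \<le> \<delta>)"
      using blocks[of \<epsilon> e \<delta>, OF summ dpos] by blast
    show ?thesis
    proof (intro exI allI impI)
      fix t m L assume t: "\<forall>n. \<bar>t n\<bar> \<le> \<epsilon> n" and m: "N \<le> m"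
      obtain s where s: "\<forall>n. \<bar>s n\<bar> = \<epsilon> n"
        "norm (0 + (\<Sum>k\<in>{m..<L}. t k *\<^sub>R e k)) \<le> norm (0 + (\<Sum>k\<in>{m..<L}. s k *\<^sub>R e k))"
        using box_to_signs[of "{m..<L}" t \<epsilon> 0 e] t assms(4) by blast
      have "norm (\<Sum>k\<in>{m..<L}. s k *\<^sub>R e k) \<le> \<delta>" using s(1) N m by blast
      thus "norm (\<Sum>k\<in>{m..<L}. t k *\<^sub>R e k) \<le> \<delta>" using s(2) by simp
    qed
  qed
  have "seq_compact K"
  proof (rule seq_compactI)
    fix x :: "nat \<Rightarrow> 'a" assume xK: "\<forall>n. x n \<in> K"
    have "\<And>j n. \<bar>coord e n (x j)\<bar> \<le> \<epsilon> n" using xK unfolding K_def brick_def by blast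
    from box_subseq[of "\<lambda>j n. coord e n (x j)" \<epsilon>, OF this] obtain r a where ra: "strict_mono r" "\<forall>n. \<bar>a n\<bar> \<le> \<epsilon> n"
      "\<forall>n. (\<lambda>j. coord e n (x (r j))) \<longlonglongrightarrow> a n" by blast
    have sa: "summable (\<lambda>k. a k *\<^sub>R e k)"
      unfolding summable_Cauchy
    proof (intro allI impI)
      fix d :: real assume "d > 0"
      then obtain N where N: "\<forall>t. (\<forall>n. \<bar>t n\<bar> \<le> \<epsilon> n) \<longrightarrow> (\<forall>m\<ge>N. \<forall>L. norm (\<Sum>k\<in>{m..<L}. t k *\<^sub>R e k) \<le> d/2)"
        using tails[of "d/2"] by auto
      show "\<exists>N. \<forall>m\<ge>N. \<forall>n. norm (\<Sum>k\<in>{m..<n}. a k *\<^sub>R e k) < d"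
      proof (intro exI allI impI)
        fix m n assume "N \<le> m"
        hence "norm (\<Sum>k\<in>{m..<n}. a k *\<^sub>R e k) \<le> d/2" using N ra(2) by blast
        thus "norm (\<Sum>k\<in>{m..<n}. a k *\<^sub>R e k) < d" using \<open>d > 0\<close> by linarith
      qed
    qed
    define y where "y = (\<Sum>k. a k *\<^sub>R e k)"
    have ys: "(\<lambda>k. a k *\<^sub>R e k) sums y" unfolding y_def using sa by (rule summable_sums)
    have cy: "coord e n y = a n" for n by (rule coord_eq[OF B ys])
    have yK: "y \<in> K" unfolding K_def brick_def using cy ra(2) by simp
    have "(x \<circ> r) \<longlonglongrightarrow> y"
      unfolding lim_sequentially
    proof (intro allI impI)
      fix d :: real assume d: "d > 0"
      then obtain N where N: "\<forall>t. (\<forall>n. \<bar>t n\<bar> \<le> \<epsilon> n) \<longrightarrow> (\<forall>m\<ge>N. \<forall>L. norm (\<Sum>k\<in>{m..<L}. t k *\<^sub>R e k) \<le> d/4)"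
        using tails[of "d/4"] by auto
      have tb: "norm (z - (\<Sum>k<N. coord e k z *\<^sub>R e k)) \<le> d/4" if "z \<in> K" for z
      proof (rule tail_bound[OF coord_sums[OF B]])
        show "\<forall>m\<ge>N. \<forall>L. norm (\<Sum>k\<in>{m..<L}. coord e k z *\<^sub>R e k) \<le> d / 4"
        proof -
          have "\<forall>n. \<bar>coord e n z\<bar> \<le> \<epsilon> n" using that unfolding K_def brick_def by blast
          thus ?thesis using N[rule_format, of "\<lambda>k. coord e k z"] by blast
        qed
      qed
      have lim0: "(\<lambda>j. \<Sum>k<N. (coord e k (x (r j)) - a k) *\<^sub>R e k) \<longlonglongrightarrow> (\<Sum>k<N. (a k - a k) *\<^sub>R e k)"
        using ra(3) by (intro tendsto_sum tendsto_scaleR tendsto_diff tendsto_const) auto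
      hence "\<exists>j0. \<forall>j\<ge>j0. dist (\<Sum>k<N. (coord e k (x (r j)) - a k) *\<^sub>R e k) 0 < d/4"
      proof -
        have "d/4 > 0" using d by simp
        have l0: "(\<lambda>j. \<Sum>k<N. (coord e k (x (r j)) - a k) *\<^sub>R e k) \<longlonglongrightarrow> 0" using lim0 by simp
        show ?thesis using l0[unfolded lim_sequentially, rule_format, OF \<open>d/4 > 0\<close>] .
      qed
      then obtain j0 where j0: "\<And>j. j \<ge> j0 \<Longrightarrow> norm (\<Sum>k<N. (coord e k (x (r j)) - a k) *\<^sub>R e k) < d/4"
        by auto
      show "\<exists>j0. \<forall>j\<ge>j0. dist ((x \<circ> r) j) y < d"
      proof (intro exI allI impI)
        fix j assume "j \<ge> j0"
        define z where "z = x (r j)"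
        have zK: "z \<in> K" using xK z_def by simp
        have e1: "norm (z - (\<Sum>k<N. coord e k z *\<^sub>R e k)) \<le> d/4" by (rule tb[OF zK])
        have e2: "norm (y - (\<Sum>k<N. coord e k y *\<^sub>R e k)) \<le> d/4" by (rule tb[OF yK])
        have e3: "norm (\<Sum>k<N. (coord e k z - a k) *\<^sub>R e k) < d/4" using j0[OF \<open>j \<ge> j0\<close>] z_def by simp
        have eq: "z - y = (z - (\<Sum>k<N. coord e k z *\<^sub>R e k)) + (\<Sum>k<N. (coord e k z - a k) *\<^sub>R e k)
                  - (y - (\<Sum>k<N. coord e k y *\<^sub>R e k))"
          by (simp add: cy scaleR_diff_left sum_subtractf algebra_simps)
        have "norm (z - y) \<le> norm (z - (\<Sum>k<N. coord e k z *\<^sub>R e k)) + norm (\<Sum>k<N. (coord e k z - a k) *\<^sub>R e k)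
                  + norm (y - (\<Sum>k<N. coord e k y *\<^sub>R e k))"
          unfolding eq
          using norm_triangle_ineq4[of "(z - (\<Sum>k<N. coord e k z *\<^sub>R e k)) + (\<Sum>k<N. (coord e k z - a k) *\<^sub>R e k)" "y - (\<Sum>k<N. coord e k y *\<^sub>R e k)"]
            norm_triangle_ineq[of "z - (\<Sum>k<N. coord e k z *\<^sub>R e k)" "\<Sum>k<N. (coord e k z - a k) *\<^sub>R e k"]
          by linarith
        thus "dist ((x \<circ> r) j) y < d" using e1 e2 e3 d by (simp add: dist_norm z_def)
      qed
    qed
    thus "\<exists>l\<in>K. \<exists>r. strict_mono r \<and> (x \<circ> r) \<longlonglongrightarrow> l" using yK ra(1) by blast
  qed
  thus ?thesis unfolding K_def by (simp add: compact_eq_seq_compact_metric)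
qed

end
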